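(* Let $(X,\tau,\mathcal{I})$ be a $T_{\mathcal{I}}$-space and let $A\subseteq X$. Then $(A,\tau|_A,\mathcal{I}_A)$ is a $T_{\mathcal{I}_A}$-space, where $\tau|_A$ is the subspace topology and $\mathcal{I}_A=\{I\in\mathcal{I}: I\subseteq A\}=\{I\cap A: I\in\mathcal{I}\}$.
   Context: An ideal on $X$ is a nonempty collection of subsets closed under subsets and finite unions. $(X,\tau,\mathcal{I})$ is a $T_{\mathcal{I}}$-space if for every $I\in\mathcal{I}$ and every $x\in X\setminus I$ there is a set $A_x$ with $x\in A_x$, $A_x\cap I=\emptyset$, and $A_x$ open or closed. *)

theory Defs
  imports "HOL-Analysis.Analysis"
begin

definition is_ideal_on :: "'a set \<Rightarrow> 'a set set \<Rightarrow> bool" where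
  "is_ideal_on S \<I> \<longleftrightarrow> \<I> \<noteq> {} \<and> (\<forall>I\<in>\<I>. I \<subseteq> S)
     \<and> (\<forall>I\<in>\<I>. \<forall>J. J \<subseteq> I \<longrightarrow> J \<in> \<I>)
     \<and> (\<forall>I\<in>\<I>. \<forall>J\<in>\<I>. I \<union> J \<in> \<I>)"

definition T_ideal_space :: "'a topology \<Rightarrow> 'a set set \<Rightarrow> bool" where
  "T_ideal_space T \<I> \<longleftrightarrow>
     (\<forall>I\<in>\<I>. \<forall>x\<in>topspace T - I. \<exists>A. x \<in> A \<and> A \<inter> I = {}
        \<and> (openin T A \<or> closedin T A))"

definition ideal_restrict :: "'a set set \<Rightarrow> 'a set \<Rightarrow> 'a set set" where
  "ideal_restrict \<I> A = {I \<in> \<I>. I \<subseteq> A}"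

end

theory Submission
  imports Defs
begin

theorem mainTheorem4:
  fixes T :: "'a topology" and \<I> :: "'a set set" and A :: "'a set"
  assumes "is_ideal_on (topspace T) \<I>"
    and "T_ideal_space T \<I>"
    and "A \<subseteq> topspace T"
  shows "is_ideal_on A (ideal_restrict \<I> A)
         \<and> ideal_restrict \<I> A = {I \<inter> A | I. I \<in> \<I>}
         \<and> T_ideal_space (subtopology T A) (ideal_restrict \<I> A)"
proof -
  have ne: "\<I> \<noteq> {}" and dn: "\<And>I J. I \<in> \<I> \<Longrightarrow> J \<subseteq> I \<Longrightarrow> J \<in> \<I>"
    and un: "\<And>I J. I \<in> \<I> \<Longrightarrow> J \<in> \<I> \<Longrightarrow> I \<union> J \<in> \<I>"
    using assms(1) unfolding is_ideal_on_def by blast+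
  have e: "{} \<in> \<I>" using ne dn by blast
  have 1: "is_ideal_on A (ideal_restrict \<I> A)"
    unfolding is_ideal_on_def ideal_restrict_def using e dn un by blast
  have 2: "ideal_restrict \<I> A = {I \<inter> A | I. I \<in> \<I>}"
    unfolding ideal_restrict_def
  proof (intro equalityI subsetI)
    fix I assume "I \<in> {I \<in> \<I>. I \<subseteq> A}"
    then show "I \<in> {I \<inter> A | I. I \<in> \<I>}" by (auto intro!: exI[of _ I])
  next
    fix K assume "K \<in> {I \<inter> A | I. I \<in> \<I>}"
    then obtain I where "I \<in> \<I>" "K = I \<inter> A" by blast
    then show "K \<in> {I \<in> \<I>. I \<subseteq> A}" using dn[of I K] by blast
  qed
  have 3: "T_ideal_space (subtopology T A) (ideal_restrict \<I> A)"
    unfolding T_ideal_space_def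
  proof (intro ballI)
    fix I x assume I: "I \<in> ideal_restrict \<I> A" and x: "x \<in> topspace (subtopology T A) - I"
    have "I \<in> \<I>" using I unfolding ideal_restrict_def by blast
    moreover have "x \<in> topspace T - I" "x \<in> A" using x assms(3) by auto
    ultimately obtain B where B: "x \<in> B" "B \<inter> I = {}" "openin T B \<or> closedin T B"
      using assms(2) unfolding T_ideal_space_def by blast
    have "openin (subtopology T A) (A \<inter> B) \<or> closedin (subtopology T A) (A \<inter> B)"
      using B(3) by (metis inf_commute openin_subtopology_Int closedin_subtopology_Int_closed
          closedin_subtopology inf.absorb_iff2 topspace_subtopology)
    then show "\<exists>C. x \<in> C \<and> C \<inter> I = {} \<and> (openin (subtopology T A) C \<or> closedin (subtopology T A) C)"
      using B \<open>x \<in> A\<close> by (intro exI[of _ "A \<inter> B"]) auto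
  qed
  show ?thesis using 1 2 3 by blast
qed

end
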